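(* Let $\mathbb{A}$ be a medial algebra over a field of characteristic not $2,3$ and let $c$ be a nonzero idempotent with $L_c$ invertible. Define on the vector space $\mathbb{A}$ the new multiplication $x\circ y=L_c^{-1}(xy)$. Then $(\mathbb{A},\circ)$ is a unital commutative associative algebra.
   Context: All algebras are commutative, possibly nonassociative, finite-dimensional. Medial: $(xy)(zw)=(xz)(yw)$ identically. $L_c:x\mapsto cx$. *)

theory Defs
  imports Main "HOL.Vector_Spaces"
begin

definition bilinear_product :: "('k::field \<Rightarrow> 'v::ab_group_add \<Rightarrow> 'v) \<Rightarrow> ('v \<Rightarrow> 'v \<Rightarrow> 'v) \<Rightarrow> bool" where
  "bilinear_product scale m \<longleftrightarrow>
     (\<forall>x y z. m (x + y) z = m x z + m y z) \<and>
     (\<forall>x y z. m x (y + z) = m x y + m x z) \<and>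
     (\<forall>a x y. m (scale a x) y = scale a (m x y)) \<and>
     (\<forall>a x y. m x (scale a y) = scale a (m x y))"

definition medial :: "('v \<Rightarrow> 'v \<Rightarrow> 'v) \<Rightarrow> bool" where
  "medial m \<longleftrightarrow> (\<forall>x y z w. m (m x y) (m z w) = m (m x z) (m y w))"

definition finite_dim :: "('k::field \<Rightarrow> 'v::ab_group_add \<Rightarrow> 'v) \<Rightarrow> bool" where
  "finite_dim scale \<longleftrightarrow> (\<exists>B. finite B \<and> module.span scale B = UNIV)"

end

theory Submission
  imports Defs
begin

theorem proposition3p9:
  fixes scale :: "'k::field \<Rightarrow> 'v::ab_group_add \<Rightarrow> 'v"
    and mult :: "'v \<Rightarrow> 'v \<Rightarrow> 'v"
    and c :: 'v
  assumes vs: "vector_space scale"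
    and fd: "finite_dim scale"
    and char2: "(2::'k) \<noteq> 0" and char3: "(3::'k) \<noteq> 0"
    and alg: "bilinear_product scale mult"
    and comm: "\<And>x y. mult x y = mult y x"
    and med: "medial mult"
    and idem: "mult c c = c" and nz: "c \<noteq> 0"
    and Lc_inv: "bij (mult c)"
  shows "let circ = (\<lambda>x y. inv (mult c) (mult x y)) in
           bilinear_product scale circ \<and>
           (\<forall>x y. circ x y = circ y x) \<and>
           (\<forall>x y z. circ (circ x y) z = circ x (circ y z)) \<and>
           (\<exists>e. \<forall>x. circ e x = x \<and> circ x e = x)"
proof -
  let ?L = "mult c"
  let ?I = "inv (mult c)"
  have inj: "inj ?L" and surj: "surj ?L" using Lc_inv bij_is_inj bij_is_surj by auto
  have LI: "\<And>a. ?L (?I a) = a" using surj by (simp add: surj_f_inv_f)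
  have IL: "\<And>x. ?I (?L x) = x" using inj by (simp add: inv_f_f)
  have ladd: "\<And>x y z. mult x (y + z) = mult x y + mult x z"
    and radd: "\<And>x y z. mult (x + y) z = mult x z + mult y z"
    and lsc: "\<And>a x y. mult (scale a x) y = scale a (mult x y)"
    and rsc: "\<And>a x y. mult x (scale a y) = scale a (mult x y)"
    using alg unfolding bilinear_product_def by auto
  have med': "\<And>x y z w. mult (mult x y) (mult z w) = mult (mult x z) (mult y w)"
    using med unfolding medial_def by blast
  have hom: "\<And>x y. ?L (mult x y) = mult (?L x) (?L y)"
    by (metis idem med')
  have Iadd: "\<And>a b. ?I (a + b) = ?I a + ?I b"
    by (metis IL LI ladd)
  have Isc: "\<And>k a. ?I (scale k a) = scale k (?I a)"
    by (metis IL LI rsc)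
  have key: "\<And>x y z. mult (?I (mult x y)) z = mult x (?I (mult y z))"
  proof -
    fix x y z
    have "?L (mult (?I (mult x y)) z) = mult (mult x y) (?L z)" by (simp add: hom LI)
    also have "\<dots> = mult (mult x c) (mult y z)" using med' by blast
    also have "\<dots> = ?L (mult x (?I (mult y z)))" by (simp add: hom LI comm)
    finally show "mult (?I (mult x y)) z = mult x (?I (mult y z))" using inj by (simp add: inj_eq)
  qed
  show ?thesis unfolding Let_def
  proof (intro conjI allI)
    show "bilinear_product scale (\<lambda>x y. ?I (mult x y))"
      unfolding bilinear_product_def by (simp add: ladd radd lsc rsc Iadd Isc)
    show "\<And>x y. ?I (mult x y) = ?I (mult y x)" by (simp add: comm)
    show "\<And>x y z. ?I (mult (?I (mult x y)) z) = ?I (mult x (?I (mult y z)))" by (simp add: key)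
    show "\<exists>e. \<forall>x. ?I (mult e x) = x \<and> ?I (mult x e) = x"
      by (rule exI[of _ c]) (metis IL comm)
  qed
qed

end
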